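(* Let $Q\subseteq V$ be a polyhedron, $F$ a face of $Q$, and $v\in V$. Then the function $\overline{j}_{C_F+v}:\mathrm{Def}^+(Q)\to\mathbb Z$ defined by $\overline{j}_{C_F+v}(P)=1$ if $C_F+v$ tightly contains $P$ and $\overline{j}_{C_F+v}(P)=0$ otherwise, is valuative on $\mathrm{Def}^+(Q)$ (equivalently, it extends to a $\mathbb Z$-linear map $\mathbb I(\mathrm{Def}^+(Q))\to\mathbb Z$).
   Context: $V$ is a finite-dimensional real vector space with inner product $\langle\cdot,\cdot\rangle$. For a polyhedron $P\subseteq V$, $\mathbf 1_P:V\to\mathbb Z$ is its indicator function. For a family $\mathscr P$ of polyhedra, the indicator group $\mathbb I(\mathscr P)$ is the $\mathbb Z$-submodule of $\mathbb Z^V$ spanned by $\{\mathbf 1_P: P\in\mathscr P\}$. A function $f:\mathscr P\to A$ to an abelian group is valuative (a valuation) if $\sum_i a_i f(P_i)=0$ whenever $\sum_i a_i\mathbf 1_{P_i}=0$ with $a_i\in\mathbb Z$, $P_i\in\mathscr P$ (equivalently, $f$ extends to a $\mathbb Z$-linear map on $\mathbb I(\mathscr P)$). For a polyhedron $Q$, $\Sigma_Q$ is its outer normal fan; for a face $F$, $\sigma_F\in\Sigma_Q$ is the cone of linear functionals attaining their maximum on $Q$ exactly on $F$; the tangent cone of $Q$ at $F$ is $C_F=\sigma_F^\vee=\mathrm{Cone}(v'-v\mid v\in F, v'\in Q)$. A polyhedron $P$ is an extended deformation of $Q$ if each cone of $\Sigma_P$ is a union of cones of $\Sigma_Q$; $\mathrm{Def}^+(Q)$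 denotes the set of all extended deformations of $Q$. For a cone $C$, $\mathrm{lineal}(C)$ is its lineality space (the maximal linear subspace contained in $C$). A translate $C+v$ tightly contains a polyhedron $P$ if $P\subseteq C+v$ and $P\cap(\mathrm{lineal}(C)+v)\neq\emptyset$. *)

theory Defs
  imports "HOL-Analysis.Analysis"
begin

text \<open>Faces of a polyhedron are taken to be nonempty (paper convention).
  Linear functionals on V are identified with vectors via the inner product.\<close>

definition normal_cone :: "'a::euclidean_space set \<Rightarrow> 'a set \<Rightarrow> 'a set" where
  "normal_cone Q F = {u. {x \<in> Q. \<forall>y \<in> Q. u \<bullet> y \<le> u \<bullet> x} = F}"

definition normal_fan :: "'a::euclidean_space set \<Rightarrow> 'a set set" where
  "normal_fan Q = {normal_cone Q F | F. F face_of Q \<and> F \<noteq> {}}"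

definition tangent_cone :: "'a::euclidean_space set \<Rightarrow> 'a set \<Rightarrow> 'a set" where
  "tangent_cone Q F = convex_cone hull {v' - v | v v'. v \<in> F \<and> v' \<in> Q}"

definition ext_deformations :: "'a::euclidean_space set \<Rightarrow> 'a set set" where
  "ext_deformations Q = {P. polyhedron P \<and> P \<noteq> {} \<and>
      (\<forall>\<sigma> \<in> normal_fan P. \<exists>S. S \<subseteq> normal_fan Q \<and> \<sigma> = \<Union>S)}"

definition lineal :: "'a::euclidean_space set \<Rightarrow> 'a set" where
  "lineal C = (THE L. subspace L \<and> L \<subseteq> C \<and> (\<forall>M. subspace M \<and> M \<subseteq> C \<longrightarrow> M \<subseteq> L))"

definition tightly_contains :: "'a::euclidean_space set \<Rightarrow> 'a \<Rightarrow> 'a set \<Rightarrow> bool" where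
  "tightly_contains C v P \<longleftrightarrow> P \<subseteq> (\<lambda>x. x + v) ` C \<and> P \<inter> ((\<lambda>x. x + v) ` lineal C) \<noteq> {}"

definition valuative :: "'a set set \<Rightarrow> ('a set \<Rightarrow> 'b::comm_ring_1) \<Rightarrow> bool" where
  "valuative \<P> f \<longleftrightarrow>
     (\<forall>ps :: ('a set \<times> int) list.
        (\<forall>(P, a) \<in> set ps. P \<in> \<P>) \<longrightarrow>
        (\<forall>x. (\<Sum>(P, a) \<leftarrow> ps. a * indicator P x) = (0::int)) \<longrightarrow>
        (\<Sum>(P, a) \<leftarrow> ps. of_int a * f P) = 0)"

end

theory Submission
  imports Defs
begin

lemma sum_list_diff_pair:
  "(\<Sum>(i,a)\<leftarrow>ps. (a::int) * (f i - g i)) = (\<Sum>(i,a)\<leftarrow>ps. a * f i) - (\<Sum>(i,a)\<leftarrow>ps. a * g i)"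
  by (induction ps) (auto simp: algebra_simps)

lemma sum_list_add_pair:
  "(\<Sum>(i,a)\<leftarrow>ps. (a::int) * (f i + g i)) = (\<Sum>(i,a)\<leftarrow>ps. a * f i) + (\<Sum>(i,a)\<leftarrow>ps. a * g i)"
  by (induction ps) (auto simp: algebra_simps)

lemma sum_list_swap_pair:
  assumes "finite M"
  shows "(\<Sum>(i,a)\<leftarrow>ps. (a::int) * (\<Sum>m\<in>M. h m i)) = (\<Sum>m\<in>M. (\<Sum>(i,a)\<leftarrow>ps. a * h m i))"
  by (induction ps) (auto simp: algebra_simps sum_distrib_left sum.distrib)

lemma sum_list_cong_pair:
  assumes "\<And>i a. (i,a) \<in> set ps \<Longrightarrow> f i = g i"
  shows "(\<Sum>(i,a)\<leftarrow>ps. (a::int) * f i) = (\<Sum>(i,a)\<leftarrow>ps. a * g i)"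
  using assms by (intro arg_cong[where f=sum_list] map_cong) (auto split: prod.splits)

lemma interval_between:
  fixes I :: "real set"
  assumes "convex I" "p \<in> I" "q \<in> I" "p \<le> t" "t \<le> q"
  shows "t \<in> I"
  using assms is_interval_convex_1 is_interval_1 by blast

lemma interval_euler:
  fixes ps :: "('i \<times> int) list" and I :: "'i \<Rightarrow> real set"
  assumes cc: "\<And>i a. (i,a) \<in> set ps \<Longrightarrow> closed (I i) \<and> convex (I i)"
    and z: "\<And>t. (\<Sum>(i,a)\<leftarrow>ps. a * indicator (I i) t) = (0::int)"
  shows "(\<Sum>(i,a)\<leftarrow>ps. a * of_bool (I i \<noteq> {})) = 0"
proof -
  define U where "U i = (I i \<noteq> {} \<and> \<not> bdd_below (I i))" for i
  define M where "M i = (I i \<noteq> {} \<and> bdd_below (I i))" for i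
  have split: "of_bool (I i \<noteq> {}) = (of_bool (U i) + of_bool (M i) :: int)" for i
    by (auto simp: U_def M_def)
  have A: "(\<Sum>(i,a)\<leftarrow>ps. a * of_bool (U i)) = 0"
  proof -
    have ev: "eventually (\<lambda>t. indicator (I i) t = (of_bool (U i)::int)) at_bot"
      if "(i,a) \<in> set ps" for i a
    proof -
      from cc[OF that] have cl: "closed (I i)" and cv: "convex (I i)" by auto
      show ?thesis
      proof (cases "I i = {}")
        case True then show ?thesis by (simp add: U_def)
      next
        case ne: False
        show ?thesis
        proof (cases "bdd_below (I i)")
          case True
          have "Inf (I i) \<in> I i" using closed_contains_Inf[OF ne True cl] .
          have "eventually (\<lambda>t. t < Inf (I i)) at_bot"
            by (simp add: eventually_at_bot_dense)
          then show ?thesis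
          proof (rule eventually_mono)
            fix t assume "t < Inf (I i)"
            then have "t \<notin> I i" using True cInf_lower by fastforce
            then show "indicator (I i) t = (of_bool (U i)::int)" using True by (simp add: U_def)
          qed
        next
          case False
          obtain p where p: "p \<in> I i" using ne by auto
          have "eventually (\<lambda>t. t \<le> p) at_bot" by (simp add: eventually_le_at_bot)
          then show ?thesis
          proof (rule eventually_mono)
            fix t assume "t \<le> p"
            from False obtain q where "q \<in> I i" "q < t"
              unfolding bdd_below_def by (meson not_le)
            then have "t \<in> I i" using interval_between[OF cv \<open>q \<in> I i\<close> p] \<open>t \<le> p\<close> by auto
            then show "indicator (I i) t = (of_bool (U i)::int)" using False ne by (simp add: U_def)
          qed
        qed
      qed
    qed
    have "eventually (\<lambda>t. \<forall>x\<in>set ps. indicator (I (fst x)) t = (of_bool (U (fst x))::int)) at_bot"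
      using ev by (intro eventually_ball_finite) (simp, intro ballI, metis prod.collapse)
    then obtain t where t: "\<forall>x\<in>set ps. indicator (I (fst x)) t = (of_bool (U (fst x))::int)"
      using eventually_happens' trivial_limit_at_bot_linorder by blast
    have "(\<Sum>(i,a)\<leftarrow>ps. a * of_bool (U i)) = (\<Sum>(i,a)\<leftarrow>ps. a * indicator (I i) t)"
      by (rule sum_list_cong_pair) (use t in force)
    then show ?thesis using z by simp
  qed
  define Ms where "Ms = (\<lambda>x. Inf (I (fst x))) ` {x\<in>set ps. M (fst x)}"
  have fMs: "finite Ms" by (simp add: Ms_def)
  have B1: "(\<Sum>(i,a)\<leftarrow>ps. a * of_bool (M i \<and> Inf (I i) = m)) = 0" for m
  proof -
    have ev: "eventually (\<lambda>e. (of_bool (M i \<and> Inf (I i) = m)::int) = indicator (I i) m - indicator (I i) (m - e)) (at_right 0)"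
      if "(i,a) \<in> set ps" for i a
    proof -
      from cc[OF that] have cl: "closed (I i)" and cv: "convex (I i)" by auto
      show ?thesis
      proof (cases "m \<in> I i")
        case mI: True
        show ?thesis
        proof (cases "M i \<and> Inf (I i) = m")
          case True
          have "eventually (\<lambda>e. e > 0) (at_right (0::real))" by (simp add: eventually_at_right_less)
          then show ?thesis
          proof (rule eventually_mono)
            fix e :: real assume "e > 0"
            then have "m - e \<notin> I i" using True cInf_lower unfolding M_def by fastforce
            then show "(of_bool (M i \<and> Inf (I i) = m)::int) = indicator (I i) m - indicator (I i) (m - e)"
              using True mI by simp
          qed
        next
          case False
          have "\<exists>q\<in>I i. q < m"
          proof (cases "bdd_below (I i)")
            case True
            have "Inf (I i) \<in> I i" using closed_contains_Inf[OF _ True cl] mI by auto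
            moreover have "Inf (I i) \<le> m" using cInf_lower[OF mI True] .
            moreover have "Inf (I i) \<noteq> m" using False True mI by (auto simp: M_def)
            ultimately show ?thesis by force
          next
            case False then show ?thesis unfolding bdd_below_def by (meson not_le)
          qed
          then obtain q where q: "q \<in> I i" "q < m" by auto
          have "eventually (\<lambda>e. e > 0 \<and> e < m - q) (at_right (0::real))"
            using q by (auto simp: eventually_at_right_field intro!: exI[of _ "m - q"])
          then show ?thesis
          proof (rule eventually_mono)
            fix e :: real assume e: "e > 0 \<and> e < m - q"
            then have "m - e \<in> I i" using interval_between[OF cv q(1) mI, of "m - e"] by auto
            then show "(of_bool (M i \<and> Inf (I i) = m)::int) = indicator (I i) m - indicator (I i) (m - e)"
              using False mI by simp
          qed
        qed
      next
        case mI: False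
        have nM: "\<not> (M i \<and> Inf (I i) = m)"
          using closed_contains_Inf[OF _ _ cl] mI by (auto simp: M_def)
        have "open (- I i)" using cl by auto
        then obtain r where r: "r > 0" "\<And>y. dist y m < r \<Longrightarrow> y \<in> - I i"
          using mI unfolding open_dist by blast
        have "eventually (\<lambda>e. e > 0 \<and> e < r) (at_right (0::real))"
          using r by (auto simp: eventually_at_right_field intro!: exI[of _ r])
        then show ?thesis
        proof (rule eventually_mono)
          fix e :: real assume e: "e > 0 \<and> e < r"
          then have "m - e \<notin> I i" using r(2)[of "m - e"] by (auto simp: dist_real_def)
          then show "(of_bool (M i \<and> Inf (I i) = m)::int) = indicator (I i) m - indicator (I i) (m - e)"
            using nM mI by simp
        qed
      qed
    qed
    have "eventually (\<lambda>e. \<forall>x\<in>set ps. (of_bool (M (fst x) \<and> Inf (I (fst x)) = m)::int) = indicator (I (fst x)) m - indicator (I (fst x)) (m - e)) (at_right 0)"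
      using ev by (intro eventually_ball_finite) (simp, intro ballI, metis prod.collapse)
    then obtain e where e: "\<forall>x\<in>set ps. (of_bool (M (fst x) \<and> Inf (I (fst x)) = m)::int) = indicator (I (fst x)) m - indicator (I (fst x)) (m - e)"
      using eventually_happens' trivial_limit_at_right_real by blast
    have "(\<Sum>(i,a)\<leftarrow>ps. a * of_bool (M i \<and> Inf (I i) = m)) = (\<Sum>(i,a)\<leftarrow>ps. a * (indicator (I i) m - indicator (I i) (m - e)))"
      by (rule sum_list_cong_pair) (use e in force)
    also have "\<dots> = 0" by (simp only: sum_list_diff_pair z)
    finally show ?thesis .
  qed
  have B2: "of_bool (M i) = (\<Sum>m\<in>Ms. (of_bool (M i \<and> Inf (I i) = m)::int))" if "(i,a) \<in> set ps" for i a
  proof (cases "M i")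
    case True
    then have "Inf (I i) \<in> Ms" using that unfolding Ms_def by force
    then show ?thesis using True fMs by (simp add: sum.delta)
  next
    case False then show ?thesis by simp
  qed
  have B: "(\<Sum>(i,a)\<leftarrow>ps. a * of_bool (M i)) = 0"
  proof -
    have "(\<Sum>(i,a)\<leftarrow>ps. a * of_bool (M i)) = (\<Sum>(i,a)\<leftarrow>ps. a * (\<Sum>m\<in>Ms. (of_bool (M i \<and> Inf (I i) = m)::int)))"
      by (rule sum_list_cong_pair) (use B2 in blast)
    also have "\<dots> = (\<Sum>m\<in>Ms. (\<Sum>(i,a)\<leftarrow>ps. a * of_bool (M i \<and> Inf (I i) = m)))"
      by (rule sum_list_swap_pair[OF fMs])
    also have "\<dots> = 0" using B1 by simp
    finally show ?thesis .
  qed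
  show ?thesis
    by (simp only: split sum_list_add_pair A B)
qed


lemma fm_arith:
  fixes ai aj bi bj t ali alj :: real
  assumes "ali > 0" "alj < 0" "ai + t * ali \<le> bi" "aj + t * alj \<le> bj"
  shows "ali * aj - alj * ai \<le> ali * bj - alj * bi"
proof -
  have "0 \<le> (bi - ai - t * ali) * (- alj)" using assms by (intro mult_nonneg_nonneg) auto
  moreover have "0 \<le> (bj - aj - t * alj) * ali" using assms by (intro mult_nonneg_nonneg) auto
  ultimately show ?thesis by (simp add: algebra_simps)
qed

lemma fm_arith2:
  fixes ai aj bi bj ali alj :: real
  assumes "ali > 0" "alj < 0" "ali * aj - alj * ai \<le> ali * bj - alj * bi"
  shows "(bj - aj) / alj \<le> (bi - ai) / ali"
proof -
  have "(bj - aj) / alj = (aj - bj) / (- alj)" by (simp add: divide_simps)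
  moreover have "(aj - bj) / (- alj) \<le> (bi - ai) / ali"
    using assms by (simp add: divide_simps algebra_simps)
  ultimately show ?thesis by simp
qed

lemma polyhedron_cyl1:
  fixes P :: "'a::euclidean_space set"
  assumes "polyhedron P"
  shows "polyhedron {y. \<exists>t. y + t *\<^sub>R e \<in> P}"
proof -
  obtain Fs where fin: "finite Fs" and PF: "P = \<Inter>Fs"
    and hs: "\<forall>h\<in>Fs. \<exists>a b. a \<noteq> 0 \<and> h = {x. a \<bullet> x \<le> b}"
    using assms unfolding polyhedron_def by blast
  obtain A B where AB: "\<And>h. h \<in> Fs \<Longrightarrow> h = {x. A h \<bullet> x \<le> B h}"
    using hs by metis
  define al where "al h = A h \<bullet> e" for h
  define Z where "Z = {h\<in>Fs. al h = 0}"
  define Pos where "Pos = {h\<in>Fs. al h > 0}"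
  define Neg where "Neg = {h\<in>Fs. al h < 0}"
  define G where "G = (\<lambda>h. {y. A h \<bullet> y \<le> B h}) ` Z \<union>
     (\<lambda>(i,j). {y. (al i *\<^sub>R A j - al j *\<^sub>R A i) \<bullet> y \<le> al i * B j - al j * B i}) ` (Pos \<times> Neg)"
  have memP: "y \<in> P \<longleftrightarrow> (\<forall>h\<in>Fs. A h \<bullet> y \<le> B h)" for y
    using AB PF by auto
  have inner: "A h \<bullet> (y + t *\<^sub>R e) = A h \<bullet> y + t * al h" for h y t
    by (simp add: al_def inner_add_right)
  have eq: "{y. \<exists>t. y + t *\<^sub>R e \<in> P} = \<Inter>G"
  proof (intro set_eqI iffI)
    fix y assume "y \<in> {y. \<exists>t. y + t *\<^sub>R e \<in> P}"
    then obtain t where t: "\<forall>h\<in>Fs. A h \<bullet> y + t * al h \<le> B h" using memP inner by auto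
    show "y \<in> \<Inter>G"
    proof -
      have "A h \<bullet> y \<le> B h" if "h \<in> Z" for h using t that by (auto simp: Z_def)
      moreover have "(al i *\<^sub>R A j - al j *\<^sub>R A i) \<bullet> y \<le> al i * B j - al j * B i"
        if "i \<in> Pos" "j \<in> Neg" for i j
      proof -
        have "al i * (A j \<bullet> y) - al j * (A i \<bullet> y) \<le> al i * B j - al j * B i"
          using that t by (intro fm_arith[where t=t]) (auto simp: Pos_def Neg_def)
        then show ?thesis by (simp add: inner_diff_left)
      qed
      ultimately show ?thesis unfolding G_def by auto
    qed
  next
    fix y assume y: "y \<in> \<Inter>G"
    have yZ: "A h \<bullet> y \<le> B h" if "h \<in> Z" for h using y that unfolding G_def by auto
    have yPN: "(B j - A j \<bullet> y) / al j \<le> (B i - A i \<bullet> y) / al i" if "i \<in> Pos" "j \<in> Neg" for i j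
    proof -
      have "(al i *\<^sub>R A j - al j *\<^sub>R A i) \<bullet> y \<le> al i * B j - al j * B i"
        using y that unfolding G_def by auto
      then have "al i * (A j \<bullet> y) - al j * (A i \<bullet> y) \<le> al i * B j - al j * B i"
        by (simp add: inner_diff_left)
      then show ?thesis using that by (intro fm_arith2) (auto simp: Pos_def Neg_def)
    qed
    define Ls where "Ls = (\<lambda>j. (B j - A j \<bullet> y) / al j) ` Neg"
    define Us where "Us = (\<lambda>i. (B i - A i \<bullet> y) / al i) ` Pos"
    have fLs: "finite Ls" "finite Us" using fin by (auto simp: Ls_def Us_def Neg_def Pos_def)
    define t where "t = (if Ls = {} then Min (insert 0 Us) else Max Ls)"
    have tU: "t \<le> (B i - A i \<bullet> y) / al i" if "i \<in> Pos" for i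
    proof (cases "Ls = {}")
      case True
      then show ?thesis using that fLs by (auto simp: t_def Us_def intro!: Min_le)
    next
      case False
      then show ?thesis using that fLs yPN by (auto simp: t_def Ls_def Max_le_iff)
    qed
    have tL: "(B j - A j \<bullet> y) / al j \<le> t" if "j \<in> Neg" for j
    proof -
      have "Ls \<noteq> {}" using that by (auto simp: Ls_def)
      then show ?thesis using that fLs by (auto simp: t_def Ls_def intro!: Max_ge)
    qed
    have "\<forall>h\<in>Fs. A h \<bullet> y + t * al h \<le> B h"
    proof
      fix h assume h: "h \<in> Fs"
      consider "al h = 0" | "al h > 0" | "al h < 0" by linarith
      then show "A h \<bullet> y + t * al h \<le> B h"
      proof cases
        case 1 then show ?thesis using yZ h by (auto simp: Z_def)
      next
        case 2
        then have "t \<le> (B h - A h \<bullet> y) / al h" using tU h by (auto simp: Pos_def)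
        then show ?thesis using 2 by (simp add: pos_le_divide_eq algebra_simps)
      next
        case 3
        then have "(B h - A h \<bullet> y) / al h \<le> t" using tL h by (auto simp: Neg_def)
        then show ?thesis using 3 by (simp add: neg_divide_le_eq algebra_simps)
      qed
    qed
    then show "y \<in> {y. \<exists>t. y + t *\<^sub>R e \<in> P}" using memP inner by auto
  qed
  have "finite G" using fin by (auto simp: G_def Z_def Pos_def Neg_def)
  moreover have "polyhedron S" if "S \<in> G" for S
    using that unfolding G_def by (auto simp: polyhedron_halfspace_le)
  ultimately show ?thesis unfolding eq by auto
qed

definition cyl :: "'a::euclidean_space set \<Rightarrow> 'a set \<Rightarrow> 'a set" where
  "cyl P S = {y. \<exists>s\<in>span S. y + s \<in> P}"

lemma cyl_insert: "cyl P (insert d S) = {y. \<exists>t. y + t *\<^sub>R d \<in> cyl P S}"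
proof (intro set_eqI iffI)
  fix y assume "y \<in> cyl P (insert d S)"
  then obtain s where s: "s \<in> span (insert d S)" "y + s \<in> P" by (auto simp: cyl_def)
  then obtain k where "s - k *\<^sub>R d \<in> span S" by (auto simp: span_insert)
  then show "y \<in> {y. \<exists>t. y + t *\<^sub>R d \<in> cyl P S}" using s
    by (auto simp: cyl_def intro!: exI[of _ k] bexI[of _ "s - k *\<^sub>R d"])
next
  fix y assume "y \<in> {y. \<exists>t. y + t *\<^sub>R d \<in> cyl P S}"
  then obtain t s where "s \<in> span S" "y + t *\<^sub>R d + s \<in> P" by (auto simp: cyl_def)
  moreover have "t *\<^sub>R d + s \<in> span (insert d S)"
    using \<open>s \<in> span S\<close> by (auto simp: span_insert intro!: exI[of _ t])
  ultimately show "y \<in> cyl P (insert d S)" unfolding cyl_def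
    by (auto intro!: bexI[of _ "t *\<^sub>R d + s"] simp: add.assoc)
qed

lemma polyhedron_cyl:
  fixes P :: "'a::euclidean_space set"
  assumes "polyhedron P"
  shows "polyhedron (cyl P (set ds))"
proof (induction ds)
  case Nil
  have "cyl P {} = P" by (auto simp: cyl_def)
  then show ?case using assms by simp
next
  case (Cons d ds)
  then show ?case by (simp add: cyl_insert polyhedron_cyl1)
qed

lemma euler:
  fixes ps :: "('i \<times> int) list" and S :: "'i \<Rightarrow> 'a::euclidean_space set"
  assumes poly: "\<And>i a. (i,a) \<in> set ps \<Longrightarrow> polyhedron (S i)"
    and z: "\<And>x. (\<Sum>(i,a)\<leftarrow>ps. a * indicator (S i) x) = (0::int)"
  shows "(\<Sum>(i,a)\<leftarrow>ps. a * of_bool (S i \<inter> (\<lambda>y. y + x) ` span (set ds) \<noteq> {})) = 0"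
proof (induction ds arbitrary: x)
  case Nil
  have "of_bool (S i \<inter> (\<lambda>y. y + x) ` span (set []) \<noteq> {}) = (indicator (S i) x :: int)" for i
    by (simp add: indicator_def)
  then show ?case using z by simp
next
  case (Cons d ds)
  define I where "I i = {t. x + t *\<^sub>R d \<in> cyl (S i) (set ds)}" for i
  have memI: "(t \<in> I i) = (S i \<inter> (\<lambda>y. y + (x + t *\<^sub>R d)) ` span (set ds) \<noteq> {})" for i t
  proof -
    have "(t \<in> I i) = (\<exists>s\<in>span (set ds). x + t *\<^sub>R d + s \<in> S i)" by (simp add: I_def cyl_def)
    also have "\<dots> = (S i \<inter> (\<lambda>y. y + (x + t *\<^sub>R d)) ` span (set ds) \<noteq> {})"
      by (force simp: add.commute)
    finally show ?thesis .
  qed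
  have cc: "closed (I i) \<and> convex (I i)" if "(i,a) \<in> set ps" for i a
  proof
    have pc: "polyhedron (cyl (S i) (set ds))" using poly[OF that] by (rule polyhedron_cyl)
    have "I i = (\<lambda>t. x + t *\<^sub>R d) -` cyl (S i) (set ds)" by (auto simp: I_def)
    moreover have "closed ((\<lambda>t. x + t *\<^sub>R d) -` cyl (S i) (set ds))"
      by (intro continuous_closed_vimage polyhedron_imp_closed pc continuous_intros)
    ultimately show "closed (I i)" by simp
    have cv: "convex (cyl (S i) (set ds))" using pc polyhedron_imp_convex by blast
    show "convex (I i)" unfolding convex_def
    proof (intro allI impI ballI)
      fix s t :: real and u v :: real
      assume st: "s \<in> I i" "t \<in> I i" and uv: "0 \<le> u" "0 \<le> v" "u + v = 1"
      have "u *\<^sub>R (x + s *\<^sub>R d) + v *\<^sub>R (x + t *\<^sub>R d) \<in> cyl (S i) (set ds)"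
        using cv st uv unfolding convex_def I_def by blast
      moreover have "u *\<^sub>R (x + s *\<^sub>R d) + v *\<^sub>R (x + t *\<^sub>R d) = x + (u * s + v * t) *\<^sub>R d"
        using uv by (simp add: algebra_simps flip: scaleR_add_left)
      ultimately show "u *\<^sub>R s + v *\<^sub>R t \<in> I i" by (simp add: I_def)
    qed
  qed
  have zI: "(\<Sum>(i,a)\<leftarrow>ps. a * indicator (I i) t) = (0::int)" for t
  proof -
    have "(\<Sum>(i,a)\<leftarrow>ps. a * indicator (I i) t) =
      (\<Sum>(i,a)\<leftarrow>ps. a * of_bool (S i \<inter> (\<lambda>y. y + (x + t *\<^sub>R d)) ` span (set ds) \<noteq> {}))"
      by (rule sum_list_cong_pair) (simp add: indicator_def memI)
    also have "\<dots> = 0" by (rule Cons.IH)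
    finally show ?thesis .
  qed
  have ne: "(I i \<noteq> {}) = (S i \<inter> (\<lambda>y. y + x) ` span (set (d # ds)) \<noteq> {})" for i
  proof -
    have "(I i \<noteq> {}) = (x \<in> cyl (S i) (set (d#ds)))" by (simp add: I_def cyl_insert)
    also have "\<dots> = (\<exists>s\<in>span (set (d#ds)). x + s \<in> S i)" by (simp add: cyl_def)
    also have "\<dots> = (S i \<inter> (\<lambda>y. y + x) ` span (set (d # ds)) \<noteq> {})" by (auto simp: add.commute)
    finally show ?thesis .
  qed
  have "(\<Sum>(i,a)\<leftarrow>ps. a * of_bool (I i \<noteq> {})) = 0"
    using interval_euler[of ps I] cc zI by blast
  then show ?case by (simp add: ne)
qed


definition face' :: "'a::euclidean_space set \<Rightarrow> 'a \<Rightarrow> 'a set" where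
  "face' P u = {x\<in>P. \<forall>y\<in>P. u \<bullet> y \<le> u \<bullet> x}"

lemma hs_ev:
  fixes a x z :: "'a::euclidean_space" and b :: real
  shows "eventually (\<lambda>e. a \<bullet> (x + e *\<^sub>R z) \<le> b) (at_right 0) \<longleftrightarrow> (a \<bullet> x < b \<or> (a \<bullet> x = b \<and> a \<bullet> z \<le> 0))"
    and "eventually (\<lambda>e. a \<bullet> (x + e *\<^sub>R z) \<le> b) (at_right 0) \<or> eventually (\<lambda>e. \<not> a \<bullet> (x + e *\<^sub>R z) \<le> b) (at_right 0)"
proof -
  have ex: "a \<bullet> (x + e *\<^sub>R z) = a \<bullet> x + e * (a \<bullet> z)" for e by (simp add: inner_add_right)
  define c where "c = a \<bullet> x"
  define w where "w = a \<bullet> z"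
  have T: "eventually (\<lambda>e. a \<bullet> (x + e *\<^sub>R z) \<le> b) (at_right 0)" if "c < b \<or> (c = b \<and> w \<le> 0)"
  proof (cases "c < b")
    case True
    have "\<forall>e>0. e < (b - c) / (\<bar>w\<bar> + 1) \<longrightarrow> a \<bullet> (x + e *\<^sub>R z) \<le> b"
    proof (intro allI impI)
      fix e :: real assume e: "e > 0" "e < (b - c) / (\<bar>w\<bar> + 1)"
      then have "e * (\<bar>w\<bar> + 1) < b - c" by (simp add: pos_less_divide_eq)
      moreover have "e * w \<le> e * (\<bar>w\<bar> + 1)" using e by (intro mult_left_mono) auto
      ultimately show "a \<bullet> (x + e *\<^sub>R z) \<le> b" by (simp add: ex c_def[symmetric] w_def[symmetric])
    qed
    then show ?thesis using True unfolding eventually_at_right_field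
      by (intro exI[of _ "(b - c) / (\<bar>w\<bar> + 1)"]) auto
  next
    case False
    then have "c = b" "w \<le> 0" using that by auto
    then have "\<forall>e>0. a \<bullet> (x + e *\<^sub>R z) \<le> b"
      by (auto simp: ex c_def[symmetric] w_def[symmetric] mult_nonneg_nonpos)
    then show ?thesis unfolding eventually_at_right_field by (intro exI[of _ 1]) auto
  qed
  have F: "eventually (\<lambda>e. \<not> a \<bullet> (x + e *\<^sub>R z) \<le> b) (at_right 0)" if "\<not> (c < b \<or> (c = b \<and> w \<le> 0))"
  proof (cases "c > b")
    case True
    have "\<forall>e>0. e < (c - b) / (\<bar>w\<bar> + 1) \<longrightarrow> \<not> a \<bullet> (x + e *\<^sub>R z) \<le> b"
    proof (intro allI impI)
      fix e :: real assume e: "e > 0" "e < (c - b) / (\<bar>w\<bar> + 1)"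
      then have "e * (\<bar>w\<bar> + 1) < c - b" by (simp add: pos_less_divide_eq)
      moreover have "e * (- w) \<le> e * (\<bar>w\<bar> + 1)" using e by (intro mult_left_mono) auto
      ultimately show "\<not> a \<bullet> (x + e *\<^sub>R z) \<le> b" by (simp add: ex c_def[symmetric] w_def[symmetric])
    qed
    then show ?thesis using True unfolding eventually_at_right_field
      by (intro exI[of _ "(c - b) / (\<bar>w\<bar> + 1)"]) auto
  next
    case False
    then have "c = b" "w > 0" using that by auto
    have "\<not> a \<bullet> (x + e *\<^sub>R z) \<le> b" if "e > 0" for e :: real
    proof -
      have "e * w > 0" using that \<open>w > 0\<close> by simp
      then show ?thesis using \<open>c = b\<close> by (simp add: ex c_def[symmetric] w_def[symmetric])
    qed
    then have "\<forall>e>0. \<not> a \<bullet> (x + e *\<^sub>R z) \<le> b" by blast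
    then show ?thesis unfolding eventually_at_right_field by (intro exI[of _ 1]) auto
  qed
  have nb: "\<not> (eventually (\<lambda>e. a \<bullet> (x + e *\<^sub>R z) \<le> b) (at_right 0) \<and> eventually (\<lambda>e. \<not> a \<bullet> (x + e *\<^sub>R z) \<le> b) (at_right (0::real)))"
  proof
    assume h: "eventually (\<lambda>e. a \<bullet> (x + e *\<^sub>R z) \<le> b) (at_right 0) \<and> eventually (\<lambda>e. \<not> a \<bullet> (x + e *\<^sub>R z) \<le> b) (at_right (0::real))"
    show False
      using eventually_happens'[OF trivial_limit_at_right_real eventually_conj[OF conjunct1[OF h] conjunct2[OF h]]] by blast
  qed
  show "eventually (\<lambda>e. a \<bullet> (x + e *\<^sub>R z) \<le> b) (at_right 0) \<longleftrightarrow> (a \<bullet> x < b \<or> (a \<bullet> x = b \<and> a \<bullet> z \<le> 0))"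
    using T F nb unfolding c_def w_def by blast
  show "eventually (\<lambda>e. a \<bullet> (x + e *\<^sub>R z) \<le> b) (at_right 0) \<or> eventually (\<lambda>e. \<not> a \<bullet> (x + e *\<^sub>R z) \<le> b) (at_right 0)"
    using T F by blast
qed

lemma tcone_poly:
  fixes P :: "'a::euclidean_space set"
  assumes "polyhedron P"
  shows "polyhedron {z. eventually (\<lambda>e. x + e *\<^sub>R z \<in> P) (at_right 0)}"
    and "eventually (\<lambda>e. x + e *\<^sub>R z \<in> P) (at_right 0) \<or> eventually (\<lambda>e. x + e *\<^sub>R z \<notin> P) (at_right 0)"
proof -
  obtain Fs where fin: "finite Fs" and PF: "P = \<Inter>Fs"
    and hs: "\<forall>h\<in>Fs. \<exists>a b. a \<noteq> 0 \<and> h = {x. a \<bullet> x \<le> b}"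
    using assms unfolding polyhedron_def by blast
  obtain A B where AB: "\<And>h. h \<in> Fs \<Longrightarrow> h = {x. A h \<bullet> x \<le> B h}"
    using hs by metis
  have memP: "y \<in> P \<longleftrightarrow> (\<forall>h\<in>Fs. A h \<bullet> y \<le> B h)" for y
    using AB PF by auto
  have evP: "eventually (\<lambda>e. x + e *\<^sub>R z \<in> P) (at_right 0) \<longleftrightarrow>
      (\<forall>h\<in>Fs. eventually (\<lambda>e. A h \<bullet> (x + e *\<^sub>R z) \<le> B h) (at_right 0))" for z
    unfolding memP using fin by (rule eventually_ball_finite_distrib)
  have "{z. eventually (\<lambda>e. x + e *\<^sub>R z \<in> P) (at_right 0)} =
     \<Inter>((\<lambda>h. {z. A h \<bullet> x < B h \<or> (A h \<bullet> x = B h \<and> A h \<bullet> z \<le> 0)}) ` Fs)"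
    by (auto simp: evP hs_ev(1))
  moreover have "polyhedron {z. A h \<bullet> x < B h \<or> (A h \<bullet> x = B h \<and> A h \<bullet> z \<le> 0)}" for h
  proof -
    consider "A h \<bullet> x < B h" | "A h \<bullet> x = B h" | "A h \<bullet> x > B h" by linarith
    then show ?thesis
    proof cases
      case 1 then show ?thesis by simp
    next
      case 2 then show ?thesis by (simp add: polyhedron_halfspace_le)
    next
      case 3 then show ?thesis by simp
    qed
  qed
  ultimately show "polyhedron {z. eventually (\<lambda>e. x + e *\<^sub>R z \<in> P) (at_right 0)}"
    using fin by (metis (no_types, lifting) finite_imageI imageE polyhedron_Inter)
  show "eventually (\<lambda>e. x + e *\<^sub>R z \<in> P) (at_right 0) \<or> eventually (\<lambda>e. x + e *\<^sub>R z \<notin> P) (at_right 0)"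
  proof (cases "\<forall>h\<in>Fs. eventually (\<lambda>e. A h \<bullet> (x + e *\<^sub>R z) \<le> B h) (at_right 0)")
    case True then show ?thesis using evP by blast
  next
    case False
    then obtain h where h: "h \<in> Fs" "\<not> eventually (\<lambda>e. A h \<bullet> (x + e *\<^sub>R z) \<le> B h) (at_right 0)" by blast
    then have "eventually (\<lambda>e. \<not> A h \<bullet> (x + e *\<^sub>R z) \<le> B h) (at_right 0)" using hs_ev(2) by blast
    then have "eventually (\<lambda>e. x + e *\<^sub>R z \<notin> P) (at_right 0)"
      by (rule eventually_mono) (use h memP in blast)
    then show ?thesis by blast
  qed
qed

lemma sum_list_factor_pair:
  "(\<Sum>(i,a)\<leftarrow>ps. (a::int) * (c * f i)) = c * (\<Sum>(i,a)\<leftarrow>ps. a * f i)"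
  by (induction ps) (auto simp: algebra_simps)

lemma face_indicator:
  fixes P :: "'a::euclidean_space set"
  assumes "polyhedron P"
  shows "(indicator (face' P u) x :: int) = indicator P x -
     of_bool ({z. eventually (\<lambda>e. x + e *\<^sub>R z \<in> P) (at_right 0)} \<inter> {z. u \<bullet> z \<ge> 1} \<noteq> {})"
proof (cases "x \<in> P")
  case False
  have "{z. eventually (\<lambda>e. x + e *\<^sub>R z \<in> P) (at_right 0)} = {}"
  proof (rule ccontr)
    assume "\<not> ?thesis"
    then obtain z where z: "eventually (\<lambda>e. x + e *\<^sub>R z \<in> P) (at_right 0)" by auto
    have "((\<lambda>e. x + e *\<^sub>R z) \<longlongrightarrow> x + 0 *\<^sub>R z) (at_right 0)"
      by (intro tendsto_intros)
    then have "x \<in> P"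
      using Lim_in_closed_set[OF polyhedron_imp_closed[OF assms] z trivial_limit_at_right_real] by simp
    then show False using False by simp
  qed
  moreover have "x \<notin> face' P u" using False by (simp add: face'_def)
  ultimately show ?thesis using False by simp
next
  case xP: True
  have "x \<in> face' P u \<longleftrightarrow> \<not> (\<exists>z. eventually (\<lambda>e. x + e *\<^sub>R z \<in> P) (at_right 0) \<and> u \<bullet> z \<ge> 1)"
  proof
    assume xf: "x \<in> face' P u"
    show "\<not> (\<exists>z. eventually (\<lambda>e. x + e *\<^sub>R z \<in> P) (at_right 0) \<and> u \<bullet> z \<ge> 1)"
    proof
      assume "\<exists>z. eventually (\<lambda>e. x + e *\<^sub>R z \<in> P) (at_right 0) \<and> u \<bullet> z \<ge> 1"
      then obtain z where z: "eventually (\<lambda>e. x + e *\<^sub>R z \<in> P) (at_right 0)" "u \<bullet> z \<ge> 1" by auto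
      have "eventually (\<lambda>e. x + e *\<^sub>R z \<in> P \<and> e > 0) (at_right (0::real))"
        using z(1) eventually_at_right_less by (rule eventually_conj)
      then obtain e where e: "x + e *\<^sub>R z \<in> P" "e > 0"
        using eventually_happens' trivial_limit_at_right_real by blast
      have "u \<bullet> (x + e *\<^sub>R z) \<le> u \<bullet> x" using xf e by (simp add: face'_def)
      moreover have "u \<bullet> (x + e *\<^sub>R z) = u \<bullet> x + e * (u \<bullet> z)" by (simp add: inner_add_right)
      moreover have "e * (u \<bullet> z) > 0" using e z by simp
      ultimately show False by linarith
    qed
  next
    assume nz: "\<not> (\<exists>z. eventually (\<lambda>e. x + e *\<^sub>R z \<in> P) (at_right 0) \<and> u \<bullet> z \<ge> 1)"
    show "x \<in> face' P u"
    proof (rule ccontr)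
      assume "x \<notin> face' P u"
      then obtain y where y: "y \<in> P" "u \<bullet> y > u \<bullet> x" using xP by (auto simp: face'_def not_le)
      define c where "c = u \<bullet> (y - x)"
      have c: "c > 0" using y by (simp add: c_def inner_diff_right)
      define z where "z = (1 / c) *\<^sub>R (y - x)"
      have uz: "u \<bullet> z = 1" using c by (simp add: z_def c_def)
      have "\<forall>e>0. e < c \<longrightarrow> x + e *\<^sub>R z \<in> P"
      proof (intro allI impI)
        fix e :: real assume e: "e > 0" "e < c"
        have "x + e *\<^sub>R z = (1 - e / c) *\<^sub>R x + (e / c) *\<^sub>R y"
          using c by (simp add: z_def algebra_simps)
        moreover have "(1 - e / c) *\<^sub>R x + (e / c) *\<^sub>R y \<in> P"
          using e c by (intro convexD[OF polyhedron_imp_convex[OF assms] xP y(1)]) auto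
        ultimately show "x + e *\<^sub>R z \<in> P" by simp
      qed
      then have "eventually (\<lambda>e. x + e *\<^sub>R z \<in> P) (at_right 0)"
        unfolding eventually_at_right_field using c by blast
      then show False using nz uz by auto
    qed
  qed
  then show ?thesis using xP by auto
qed

lemma face_val:
  fixes ps :: "('i \<times> int) list" and S :: "'i \<Rightarrow> 'a::euclidean_space set"
  assumes poly: "\<And>i a. (i,a) \<in> set ps \<Longrightarrow> polyhedron (S i)"
    and z: "\<And>x. (\<Sum>(i,a)\<leftarrow>ps. a * indicator (S i) x) = (0::int)"
  shows "(\<Sum>(i,a)\<leftarrow>ps. a * indicator (face' (S i) u) x) = (0::int)"
proof -
  define T where "T i = {z. eventually (\<lambda>e. x + e *\<^sub>R z \<in> S i) (at_right 0)}" for i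
  define H where "H = {z. u \<bullet> z \<ge> 1}"
  have pT: "polyhedron (T i \<inter> H)" if "(i,a) \<in> set ps" for i a
    unfolding T_def H_def using tcone_poly(1)[OF poly[OF that]] polyhedron_halfspace_ge by blast
  have zT: "(\<Sum>(i,a)\<leftarrow>ps. a * indicator (T i \<inter> H) w) = (0::int)" for w
  proof -
    have ev: "eventually (\<lambda>e. (x + e *\<^sub>R w \<in> S i) = (w \<in> T i)) (at_right 0)" if "(i,a) \<in> set ps" for i a
    proof -
      from tcone_poly(2)[OF poly[OF that], of x w]
      show ?thesis
      proof
        assume h: "eventually (\<lambda>e. x + e *\<^sub>R w \<in> S i) (at_right 0)"
        then have "w \<in> T i" by (simp add: T_def)
        with h show ?thesis by (auto elim: eventually_mono)
      next
        assume h: "eventually (\<lambda>e. x + e *\<^sub>R w \<notin> S i) (at_right 0)"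
        have "w \<notin> T i"
        proof
          assume "w \<in> T i"
          then have "eventually (\<lambda>e. x + e *\<^sub>R w \<in> S i) (at_right 0)" by (simp add: T_def)
          then show False
            using eventually_happens'[OF trivial_limit_at_right_real eventually_conj[OF h]] by blast
        qed
        with h show ?thesis by (auto elim: eventually_mono)
      qed
    qed
    have "eventually (\<lambda>e. \<forall>p\<in>set ps. (x + e *\<^sub>R w \<in> S (fst p)) = (w \<in> T (fst p))) (at_right 0)"
      using ev by (intro eventually_ball_finite) (simp, intro ballI, metis prod.collapse)
    then obtain e where e: "\<forall>p\<in>set ps. (x + e *\<^sub>R w \<in> S (fst p)) = (w \<in> T (fst p))"
      using eventually_happens' trivial_limit_at_right_real by blast
    have "(\<Sum>(i,a)\<leftarrow>ps. a * indicator (T i \<inter> H) w) = (\<Sum>(i,a)\<leftarrow>ps. a * (of_bool (w \<in> H) * indicator (S i) (x + e *\<^sub>R w)))"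
    proof (rule sum_list_cong_pair)
      fix i a assume ia: "(i,a) \<in> set ps"
      then have "(x + e *\<^sub>R w \<in> S i) = (w \<in> T i)" using e by force
      then show "indicator (T i \<inter> H) w = (of_bool (w \<in> H) * indicator (S i) (x + e *\<^sub>R w) :: int)"
        by (auto simp: indicator_def)
    qed
    also have "\<dots> = 0" by (simp only: sum_list_factor_pair z mult_zero_right)
    finally show ?thesis .
  qed
  obtain ds where ds: "set ds = (Basis :: 'a set)" using finite_list finite_Basis by blast
  have E: "(\<Sum>(i,a)\<leftarrow>ps. a * of_bool (T i \<inter> H \<inter> (\<lambda>y. y + 0) ` span (set ds) \<noteq> {})) = 0"
    by (rule euler[where S="\<lambda>i. T i \<inter> H"]) (use pT zT in auto)
  have "(\<Sum>(i,a)\<leftarrow>ps. a * indicator (face' (S i) u) x) =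
     (\<Sum>(i,a)\<leftarrow>ps. a * (indicator (S i) x - of_bool (T i \<inter> H \<inter> (\<lambda>y. y + 0) ` span (set ds) \<noteq> {})))"
  proof (rule sum_list_cong_pair)
    fix i a assume ia: "(i,a) \<in> set ps"
    show "(indicator (face' (S i) u) x :: int) = indicator (S i) x - of_bool (T i \<inter> H \<inter> (\<lambda>y. y + 0) ` span (set ds) \<noteq> {})"
      using face_indicator[OF poly[OF ia]] by (simp add: ds span_Basis T_def H_def)
  qed
  also have "\<dots> = 0" using E z by (simp only: sum_list_diff_pair diff_zero)
  finally show ?thesis .
qed


lemma exists_u0:
  fixes Q :: "'a::euclidean_space set"
  assumes "polyhedron Q" "F face_of Q" "F \<noteq> {}"
  obtains u0 where "face' Q u0 = F"
proof -
  have "F exposed_face_of Q" using exposed_face_of_polyhedron assms by blast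
  then obtain a b where ab: "Q \<subseteq> {x. a \<bullet> x \<le> b}" "F = Q \<inter> {x. a \<bullet> x = b}"
    unfolding exposed_face_of_def by blast
  obtain f where f: "f \<in> F" using assms by auto
  have "face' Q a = F"
  proof (intro set_eqI iffI)
    fix x assume "x \<in> face' Q a"
    then have "x \<in> Q" "a \<bullet> f \<le> a \<bullet> x" using f ab by (auto simp: face'_def)
    then show "x \<in> F" using ab f by fastforce
  next
    fix x assume "x \<in> F"
    then show "x \<in> face' Q a" using ab by (auto simp: face'_def)
  qed
  then show ?thesis using that by blast
qed

definition dualc :: "'a::euclidean_space set \<Rightarrow> 'a set \<Rightarrow> 'a set" where
  "dualc Q F = {z. \<forall>u. face' Q u = F \<longrightarrow> u \<bullet> z \<le> 0}"

definition perpc :: "'a::euclidean_space set \<Rightarrow> 'a set \<Rightarrow> 'a set" where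
  "perpc Q F = {z. \<forall>u. face' Q u = F \<longrightarrow> u \<bullet> z = 0}"

lemma tangent_sub_dual:
  fixes Q :: "'a::euclidean_space set"
  shows "tangent_cone Q F \<subseteq> dualc Q F"
  unfolding tangent_cone_def
proof (rule hull_minimal)
  show "{v' - v |v v'. v \<in> F \<and> v' \<in> Q} \<subseteq> dualc Q F"
    by (auto simp: dualc_def face'_def inner_diff_right)
  show "convex_cone (dualc Q F)"
    unfolding convex_cone_iff
    by (auto simp: dualc_def inner_add_right mult_nonneg_nonpos add_nonpos_nonpos)
qed

lemma dual_sub_tangent:
  fixes Q :: "'a::euclidean_space set"
  assumes Q: "polyhedron Q" and FQ: "F face_of Q" and Fne: "F \<noteq> {}" and u0: "face' Q u0 = F"
    and z: "z \<in> dualc Q F"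
  shows "z \<in> tangent_cone Q F"
proof -
  have zu: "\<And>u. face' Q u = F \<Longrightarrow> u \<bullet> z \<le> 0" using z by (auto simp: dualc_def)
  have "rel_interior F \<noteq> {}" using rel_interior_eq_empty face_of_imp_convex[OF FQ] Fne by blast
  then obtain f where f: "f \<in> rel_interior F" by blast
  have fF: "f \<in> F" using f rel_interior_subset by blast
  have FsQ: "F \<subseteq> Q" using face_of_imp_subset[OF FQ] .
  have cQ: "convex Q" using polyhedron_imp_convex[OF Q] .
  obtain Fs where fin: "finite Fs" and PF: "Q = \<Inter>Fs"
    and hs: "\<forall>h\<in>Fs. \<exists>a b. a \<noteq> 0 \<and> h = {x. a \<bullet> x \<le> b}"
    using Q unfolding polyhedron_def by blast
  obtain A B where AB: "\<And>h. h \<in> Fs \<Longrightarrow> h = {x. A h \<bullet> x \<le> B h}"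
    using hs by metis
  have memQ: "y \<in> Q \<longleftrightarrow> (\<forall>h\<in>Fs. A h \<bullet> y \<le> B h)" for y
    using AB PF by auto
  have u0le: "u0 \<bullet> y \<le> u0 \<bullet> x" if "x \<in> F" "y \<in> Q" for x y
    using that u0 by (auto simp: face'_def)
  have key: "A h \<bullet> z \<le> 0" if h: "h \<in> Fs" "A h \<bullet> f = B h" for h
  proof -
    have Hle: "\<And>x. x \<in> Q \<Longrightarrow> A h \<bullet> x \<le> B h" using memQ h(1) by blast
    have Hface: "(Q \<inter> {x. A h \<bullet> x = B h}) face_of Q"
      by (rule face_of_Int_supporting_hyperplane_le[OF cQ Hle])
    have "F \<subseteq> Q \<inter> {x. A h \<bullet> x = B h}"
      by (rule subset_of_face_of[OF Hface FsQ]) (use f fF FsQ h in auto)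
    then have AF: "\<And>y. y \<in> F \<Longrightarrow> A h \<bullet> y = B h" by auto
    have ft: "face' Q (u0 + t *\<^sub>R A h) = F" if t: "t > 0" for t
    proof (intro set_eqI iffI)
      fix x assume x: "x \<in> F"
      have "(u0 + t *\<^sub>R A h) \<bullet> y \<le> (u0 + t *\<^sub>R A h) \<bullet> x" if y: "y \<in> Q" for y
      proof -
        have "u0 \<bullet> y \<le> u0 \<bullet> x" using u0le x y by blast
        moreover have "t * (A h \<bullet> y) \<le> t * (A h \<bullet> x)" using Hle[OF y] AF[OF x] t by simp
        ultimately show ?thesis by (simp add: inner_add_left)
      qed
      then show "x \<in> face' Q (u0 + t *\<^sub>R A h)" using x FsQ by (auto simp: face'_def)
    next
      fix x assume x: "x \<in> face' Q (u0 + t *\<^sub>R A h)"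
      then have xQ: "x \<in> Q" and "(u0 + t *\<^sub>R A h) \<bullet> f \<le> (u0 + t *\<^sub>R A h) \<bullet> x"
        using fF FsQ by (auto simp: face'_def)
      then have ineq: "u0 \<bullet> f + t * (A h \<bullet> f) \<le> u0 \<bullet> x + t * (A h \<bullet> x)" by (simp add: inner_add_left)
      have "u0 \<bullet> x \<le> u0 \<bullet> f" using u0le fF xQ by blast
      moreover have "t * (A h \<bullet> x) \<le> t * (A h \<bullet> f)" using Hle[OF xQ] h(2) t by simp
      ultimately have "u0 \<bullet> x = u0 \<bullet> f" using ineq by linarith
      then have "x \<in> face' Q u0" using xQ u0le[OF fF] by (auto simp: face'_def)
      then show "x \<in> F" using u0 by simp
    qed
    show ?thesis
    proof (rule ccontr)
      assume "\<not> A h \<bullet> z \<le> 0"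
      then have pos: "A h \<bullet> z > 0" by simp
      define t where "t = (\<bar>u0 \<bullet> z\<bar> + 1) / (A h \<bullet> z)"
      have t: "t > 0" using pos by (simp add: t_def)
      have "(u0 + t *\<^sub>R A h) \<bullet> z \<le> 0" using zu[OF ft[OF t]] .
      moreover have "(u0 + t *\<^sub>R A h) \<bullet> z = u0 \<bullet> z + (\<bar>u0 \<bullet> z\<bar> + 1)"
        using pos by (simp add: inner_add_left t_def)
      ultimately show False by linarith
    qed
  qed
  have "\<forall>h\<in>Fs. eventually (\<lambda>e. A h \<bullet> (f + e *\<^sub>R z) \<le> B h) (at_right 0)"
  proof
    fix h assume h: "h \<in> Fs"
    have "A h \<bullet> f \<le> B h" using memQ fF FsQ h by blast
    then have "A h \<bullet> f < B h \<or> (A h \<bullet> f = B h \<and> A h \<bullet> z \<le> 0)" using key h by force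
    then show "eventually (\<lambda>e. A h \<bullet> (f + e *\<^sub>R z) \<le> B h) (at_right 0)" using hs_ev(1) by blast
  qed
  then have "eventually (\<lambda>e. \<forall>h\<in>Fs. A h \<bullet> (f + e *\<^sub>R z) \<le> B h) (at_right 0)"
    by (simp add: eventually_ball_finite_distrib[OF fin])
  then have "eventually (\<lambda>e. f + e *\<^sub>R z \<in> Q \<and> e > 0) (at_right (0::real))"
    by (intro eventually_conj eventually_at_right_less) (auto simp: memQ elim: eventually_mono)
  then obtain e where e: "f + e *\<^sub>R z \<in> Q" "e > 0"
    using eventually_happens' trivial_limit_at_right_real by blast
  have "(f + e *\<^sub>R z) - f \<in> tangent_cone Q F"
    unfolding tangent_cone_def using e fF by (intro hull_inc) blast
  then have "(1 / e) *\<^sub>R ((f + e *\<^sub>R z) - f) \<in> tangent_cone Q F"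
    unfolding tangent_cone_def using e by (intro convex_cone_hull_mul) auto
  then show ?thesis using e by simp
qed

lemma tangent_eq_dual:
  fixes Q :: "'a::euclidean_space set"
  assumes "polyhedron Q" "F face_of Q" "F \<noteq> {}" "face' Q u0 = F"
  shows "tangent_cone Q F = dualc Q F"
  using tangent_sub_dual dual_sub_tangent[OF assms] by blast

lemma lineal_dual: "lineal (dualc Q F) = perpc Q F"
  unfolding lineal_def
proof (rule the_equality)
  have sub: "subspace (perpc Q F)"
    unfolding subspace_def perpc_def by (auto simp: inner_add_right)
  have max: "M \<subseteq> perpc Q F" if "subspace M" "M \<subseteq> dualc Q F" for M
  proof
    fix z assume z: "z \<in> M"
    then have "- z \<in> M" using that(1) subspace_neg by blast
    then have h1: "\<And>u. face' Q u = F \<Longrightarrow> u \<bullet> z \<le> 0" and h2: "\<And>u. face' Q u = F \<Longrightarrow> u \<bullet> (- z) \<le> 0"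
      using z that(2) by (auto simp: dualc_def)
    have "u \<bullet> z = 0" if "face' Q u = F" for u
    proof -
      have "- (u \<bullet> z) \<le> 0" using h2[OF that] by simp
      then show ?thesis using h1[OF that] by linarith
    qed
    then show "z \<in> perpc Q F" by (simp add: perpc_def)
  qed
  show "subspace (perpc Q F) \<and> perpc Q F \<subseteq> dualc Q F \<and>
    (\<forall>M. subspace M \<and> M \<subseteq> dualc Q F \<longrightarrow> M \<subseteq> perpc Q F)"
    using sub max by (auto simp: dualc_def perpc_def)
  show "L = perpc Q F" if "subspace L \<and> L \<subseteq> dualc Q F \<and> (\<forall>M. subspace M \<and> M \<subseteq> dualc Q F \<longrightarrow> M \<subseteq> L)" for L
  proof -
    have "L \<subseteq> perpc Q F" using that max by blast
    moreover have "perpc Q F \<subseteq> dualc Q F" by (auto simp: dualc_def perpc_def)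
    ultimately show ?thesis using that sub by blast
  qed
qed

lemma deform_face:
  fixes Q P :: "'a::euclidean_space set"
  assumes P: "P \<in> ext_deformations Q" and u0: "face' Q u0 = F"
    and ne: "face' P u0 \<noteq> {}" and u: "face' Q u = F"
  shows "face' P u = face' P u0"
proof -
  define G where "G = face' P u0"
  obtain g where g: "g \<in> G" using ne G_def by auto
  have Pp: "polyhedron P" using P by (simp add: ext_deformations_def)
  have "G = P \<inter> {x. u0 \<bullet> x = u0 \<bullet> g}"
    using g by (auto simp: G_def face'_def) (meson order.antisym)
  moreover have "(P \<inter> {x. u0 \<bullet> x = u0 \<bullet> g}) face_of P"
    using g by (intro face_of_Int_supporting_hyperplane_le polyhedron_imp_convex Pp)
      (auto simp: G_def face'_def)
  ultimately have Gf: "G face_of P" by simp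
  have "normal_cone P G \<in> normal_fan P" using Gf g unfolding normal_fan_def by blast
  then obtain S where S: "S \<subseteq> normal_fan Q" "normal_cone P G = \<Union>S"
    using P unfolding ext_deformations_def by blast
  have "u0 \<in> normal_cone P G" by (simp add: normal_cone_def G_def face'_def)
  then obtain \<sigma> where \<sigma>: "\<sigma> \<in> S" "u0 \<in> \<sigma>" using S by auto
  then obtain F' where F': "\<sigma> = normal_cone Q F'" using S unfolding normal_fan_def by blast
  have "F' = F" using \<sigma>(2) F' u0 by (simp add: normal_cone_def face'_def)
  then have "u \<in> \<sigma>" using F' u by (simp add: normal_cone_def face'_def)
  then have "u \<in> normal_cone P G" using S \<sigma> by auto
  then show ?thesis by (simp add: normal_cone_def G_def face'_def)
qed

lemma tight_char:
  fixes Q P :: "'a::euclidean_space set"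
  assumes Q: "polyhedron Q" "F face_of Q" "F \<noteq> {}" and u0: "face' Q u0 = F"
    and P: "P \<in> ext_deformations Q"
  shows "tightly_contains (tangent_cone Q F) v P \<longleftrightarrow> face' P u0 \<inter> (\<lambda>y. y + v) ` perpc Q F \<noteq> {}"
proof -
  have C: "tangent_cone Q F = dualc Q F" using tangent_eq_dual[OF Q u0] .
  show ?thesis
  proof
    assume "tightly_contains (tangent_cone Q F) v P"
    then have sub: "P \<subseteq> (\<lambda>y. y + v) ` dualc Q F" and "P \<inter> (\<lambda>y. y + v) ` perpc Q F \<noteq> {}"
      by (auto simp: tightly_contains_def C lineal_dual)
    then obtain l where l: "l \<in> perpc Q F" "l + v \<in> P" by auto
    have "u0 \<bullet> y \<le> u0 \<bullet> (l + v)" if y: "y \<in> P" for y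
    proof -
      obtain d where d: "d \<in> dualc Q F" "y = d + v" using sub y by auto
      have "u0 \<bullet> d \<le> 0" using d u0 by (auto simp: dualc_def)
      moreover have "u0 \<bullet> l = 0" using l u0 by (auto simp: perpc_def)
      ultimately show ?thesis using d by (simp add: inner_add_right)
    qed
    then have "l + v \<in> face' P u0" using l by (auto simp: face'_def)
    then show "face' P u0 \<inter> (\<lambda>y. y + v) ` perpc Q F \<noteq> {}" using l by auto
  next
    assume "face' P u0 \<inter> (\<lambda>y. y + v) ` perpc Q F \<noteq> {}"
    then obtain l where l: "l \<in> perpc Q F" "l + v \<in> face' P u0" by auto
    have ne: "face' P u0 \<noteq> {}" using l by auto
    have "y - v \<in> dualc Q F" if y: "y \<in> P" for y
    proof -
      have "u \<bullet> (y - v) \<le> 0" if u: "face' Q u = F" for u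
      proof -
        have "l + v \<in> face' P u" using deform_face[OF P u0 ne u] l by simp
        then have "u \<bullet> y \<le> u \<bullet> (l + v)" using y by (auto simp: face'_def)
        moreover have "u \<bullet> l = 0" using l u by (auto simp: perpc_def)
        ultimately show ?thesis by (simp add: inner_diff_right inner_add_right)
      qed
      then show ?thesis by (auto simp: dualc_def)
    qed
    then have "P \<subseteq> (\<lambda>y. y + v) ` dualc Q F"
      by (auto intro!: image_eqI[where x="_ - v"])
    moreover have "l + v \<in> P" using l by (auto simp: face'_def)
    ultimately show "tightly_contains (tangent_cone Q F) v P"
      using l by (auto simp: tightly_contains_def C lineal_dual)
  qed
qed

theorem theorem2p1:
  fixes Q F :: "'a::euclidean_space set" and v :: 'a
  assumes "polyhedron Q" and "F face_of Q" and "F \<noteq> {}"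
  shows "valuative (ext_deformations Q)
           (\<lambda>P. if tightly_contains (tangent_cone Q F) v P then (1::int) else 0)"
proof -
  obtain u0 where u0: "face' Q u0 = F" using exists_u0 assms by blast
  have "subspace (perpc Q F)" unfolding subspace_def perpc_def by (auto simp: inner_add_right)
  then obtain Bs where Bs: "finite Bs" "span Bs = perpc Q F"
    by (metis eucl.basis_subspace_exists)
  obtain ds where ds: "set ds = Bs" using finite_list Bs(1) by blast
  show ?thesis unfolding valuative_def
  proof (intro allI impI)
    fix ps :: "('a set \<times> int) list"
    assume mem: "\<forall>(P, a)\<in>set ps. P \<in> ext_deformations Q"
      and z: "\<forall>x. (\<Sum>(P, a)\<leftarrow>ps. a * indicator P x) = (0::int)"
    have poly: "polyhedron P" if "(P, a) \<in> set ps" for P a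
      using mem that by (auto simp: ext_deformations_def)
    have polyf: "polyhedron (face' P u0)" if "(P, a) \<in> set ps" for P a
    proof (cases "face' P u0 = {}")
      case True then show ?thesis by simp
    next
      case False
      then obtain g where g: "g \<in> face' P u0" by auto
      then have "face' P u0 = P \<inter> {x. u0 \<bullet> x \<ge> u0 \<bullet> g}" by (auto simp: face'_def)
      then show ?thesis using poly[OF that] polyhedron_halfspace_ge by auto
    qed
    have zf: "(\<Sum>(P,a)\<leftarrow>ps. a * indicator (face' P u0) x) = (0::int)" for x
      by (rule face_val) (use poly z in auto)
    have E: "(\<Sum>(P,a)\<leftarrow>ps. a * of_bool (face' P u0 \<inter> (\<lambda>y. y + v) ` span (set ds) \<noteq> {})) = 0"
      by (rule euler[where S="\<lambda>P. face' P u0"]) (use polyf zf in auto)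
    have "(\<Sum>(P, a)\<leftarrow>ps. of_int a * (if tightly_contains (tangent_cone Q F) v P then (1::int) else 0))
        = (\<Sum>(P,a)\<leftarrow>ps. a * of_bool (face' P u0 \<inter> (\<lambda>y. y + v) ` span (set ds) \<noteq> {}))"
      unfolding of_int_eq_id id_apply
    proof (rule sum_list_cong_pair)
      fix P a assume "(P, a) \<in> set ps"
      then have "P \<in> ext_deformations Q" using mem by auto
      then show "(if tightly_contains (tangent_cone Q F) v P then (1::int) else 0) =
          of_bool (face' P u0 \<inter> (\<lambda>y. y + v) ` span (set ds) \<noteq> {})"
        using tight_char[OF assms u0] by (simp add: ds Bs)
    qed
    then show "(\<Sum>(P, a)\<leftarrow>ps. of_int a * (if tightly_contains (tangent_cone Q F) v P then (1::int) else 0)) = 0"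
      using E by simp
  qed
qed

end
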